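(* Let $N\ge5$. Define $s:(0,\infty)\to(0,\infty)$ by $s(r)=\left((N-2)\int_r^\infty(\sinh\sigma)^{1-N}d\sigma\right)^{-\frac{1}{N-2}}$, so that $\frac{ds}{s^{N-1}}=\frac{dr}{(\sinh r)^{N-1}}$, let $r=r(s)$ be its inverse, and set $\rho(s)=\left(\frac{\sinh r(s)}{s}\right)^{2(N-1)}$. Then for every $v\in C_c^\infty(0,\infty)$, $$\int_0^\infty\frac{1}{\rho(s)}(\Delta v)^2s^{N-1}ds\ge\frac{(N-1)^4}{16}\int_0^\infty\rho(s)v^2s^{N-1}ds+\frac{9}{16}\int_0^\infty\frac{\rho(s)}{r^4(s)}v^2s^{N-1}ds+\frac{(N-1)^2}{8}\int_0^\infty\frac{\rho(s)}{r^2(s)}v^2s^{N-1}ds,$$ where $\Delta v(s)=v''(s)+\frac{N-1}{s}v'(s)$ is the radial Euclidean Laplacian in $\mathbb{R}^N$. *)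

theory Defs
  imports "HOL-Analysis.Analysis"
begin

definition s_fun :: "nat \<Rightarrow> real \<Rightarrow> real" where
  "s_fun N r = ((real N - 2) * integral {r..} (\<lambda>\<sigma>. 1 / (sinh \<sigma>) ^ (N - 1)))
                 powr (- 1 / (real N - 2))"

definition r_fun :: "nat \<Rightarrow> real \<Rightarrow> real" where
  "r_fun N = inv_into {0<..} (s_fun N)"

definition rho :: "nat \<Rightarrow> real \<Rightarrow> real" where
  "rho N s = (sinh (r_fun N s) / s) ^ (2 * (N - 1))"

definition rad_lap :: "nat \<Rightarrow> (real \<Rightarrow> real) \<Rightarrow> real \<Rightarrow> real" where
  "rad_lap N v s = deriv (deriv v) s + (real N - 1) / s * deriv v s"

text \<open>C_c^infty(0,infty), functions extended by zero to all of R: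
  smooth (all iterated derivatives differentiable everywhere) with support
  contained in a compact interval [a,b] with 0 < a.\<close>
definition Cc_inf_pos :: "(real \<Rightarrow> real) \<Rightarrow> bool" where
  "Cc_inf_pos v \<longleftrightarrow> (\<forall>k x. ((deriv ^^ k) v) differentiable (at x)) \<and>
     (\<exists>a b. 0 < a \<and> a \<le> b \<and> (\<forall>x. x \<notin> {a..b} \<longrightarrow> v x = 0))"

end

theory Submission
  imports Defs
begin


lemma pw:
  fixes r sh ch m c q qpp f f1 f2 :: real
  assumes r: "r > 0" and sh: "sh > 0" and m: "m \<ge> 2" and c: "c = m^2 - m"
    and q: "q = m^2 + c/sh^2" and qpp: "qpp = c*(4/sh^2 + 6/sh^4)" and ch: "ch^2 = 1 + sh^2"
  shows "(f2 - q*f)^2 \<ge> f^2*(m^4 + m^2/(2*r^2) + 9/(16*r^4))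
     + (-2*q*f1^2 - 2*q*f*f2 + qpp*f^2) + (f1*f2/r - f1^2/(2*r^2))
     + (3*f*f1/r^3 - 9*f^2/(2*r^4))/4 + 2*m^2*(f*f1/r - f^2/(2*r^2))
     + 2*c*(4*f*f1*ch/sh^3 + 2*f^2*(sh^2 - 3*ch^2)/sh^4)"
proof -
  have h1: "f2^2 \<ge> f1^2/(4*r^2) + (f1*f2/r - f1^2/(2*r^2))"
  proof -
    have "0 \<le> (f2 - f1/(2*r))^2" by simp
    also have "\<dots> = f2^2 - (f1^2/(4*r^2) + (f1*f2/r - f1^2/(2*r^2)))"
      using r by (simp add: field_simps eval_nat_numeral)
    finally show ?thesis by simp
  qed
  have h2: "f1^2/r^2 \<ge> 9*f^2/(4*r^4) + (3*f*f1/r^3 - 9*f^2/(2*r^4))"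
  proof -
    have "0 \<le> (f1/r - 3*f/(2*r^2))^2" by simp
    also have "\<dots> = f1^2/r^2 - (9*f^2/(4*r^4) + (3*f*f1/r^3 - 9*f^2/(2*r^4)))"
      using r by (simp add: field_simps eval_nat_numeral)
    finally show ?thesis by simp
  qed
  have h3: "f1^2 \<ge> f^2/(4*r^2) + (f*f1/r - f^2/(2*r^2))"
  proof -
    have "0 \<le> (f1 - f/(2*r))^2" by simp
    also have "\<dots> = f1^2 - (f^2/(4*r^2) + (f*f1/r - f^2/(2*r^2)))"
      using r by (simp add: field_simps eval_nat_numeral)
    finally show ?thesis by simp
  qed
  have h4: "f1^2/sh^2 \<ge> 2*f^2/sh^4 + (4*f*f1*ch/sh^3 + 2*f^2*(sh^2 - 3*ch^2)/sh^4)"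
  proof -
    have sq: "(f1 - 2*ch/sh*f)^2 = f1^2 - 4*ch*f*f1/sh + 4*(1+sh^2)*f^2/sh^2"
      unfolding power2_diff using ch by (simp add: power_mult_distrib power_divide)
    have "0 \<le> (f1 - 2*ch/sh*f)^2/sh^2" by simp
    also have "\<dots> = f1^2/sh^2 - (2*f^2/sh^4 + (4*f*f1*ch/sh^3 + 2*f^2*(sh^2 - 3*(1+sh^2))/sh^4))"
      unfolding sq using sh by (simp add: field_simps eval_nat_numeral)
    also have "\<dots> = f1^2/sh^2 - (2*f^2/sh^4 + (4*f*f1*ch/sh^3 + 2*f^2*(sh^2 - 3*ch^2)/sh^4))"
      using ch by simp
    finally show ?thesis by simp
  qed
  have mm: "m*m \<ge> 2*m" using m by (intro mult_right_mono) auto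
  have c0: "c \<ge> 2" using m mm unfolding c power2_eq_square by linarith
  have m0: "m^2 \<ge> 4" using m mm unfolding power2_eq_square by linarith
  have p: "c*((2*m^2-4)*(f^2/sh^2) + (c-2)*(f^2/sh^4)) \<ge> 0"
    using c0 m0 by (intro mult_nonneg_nonneg add_nonneg_nonneg) auto
  have e: "(f2 - q*f)^2 = f2^2 + 2*m^2*f1^2 + 2*c*(f1^2/sh^2) + f^2*m^4 + 2*m^2*c*(f^2/sh^2)
       + c^2*(f^2/sh^4) - 4*c*(f^2/sh^2) - 6*c*(f^2/sh^4) + (-2*q*f1^2 - 2*q*f*f2 + qpp*f^2)"
    using sh unfolding q qpp by (simp add: field_simps power2_eq_square power4_eq_xxxx)
  have h3': "2*m^2*f1^2 \<ge> 2*m^2*(f^2/(4*r^2) + (f*f1/r - f^2/(2*r^2)))"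
    using h3 by (intro mult_left_mono) auto
  have h4': "2*c*(f1^2/sh^2) \<ge> 2*c*(2*f^2/sh^4 + (4*f*f1*ch/sh^3 + 2*f^2*(sh^2 - 3*ch^2)/sh^4))"
    using h4 c0 by (intro mult_left_mono) auto
  have h2': "f1^2/(4*r^2) \<ge> (1/4)*(9*f^2/(4*r^4) + (3*f*f1/r^3 - 9*f^2/(2*r^4)))"
    using h2 by simp
  have h12: "f2^2 \<ge> (1/4)*(9*f^2/(4*r^4) + (3*f*f1/r^3 - 9*f^2/(2*r^4))) + (f1*f2/r - f1^2/(2*r^2))"
    using h1 h2' by linarith
  let ?X = "(1/4)*(9*f^2/(4*r^4) + (3*f*f1/r^3 - 9*f^2/(2*r^4))) + (f1*f2/r - f1^2/(2*r^2))
     + 2*m^2*(f^2/(4*r^2) + (f*f1/r - f^2/(2*r^2)))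
     + 2*c*(2*f^2/sh^4 + (4*f*f1*ch/sh^3 + 2*f^2*(sh^2 - 3*ch^2)/sh^4))
     + f^2*m^4 + 2*m^2*c*(f^2/sh^2) + c^2*(f^2/sh^4) - 4*c*(f^2/sh^2) - 6*c*(f^2/sh^4) + (-2*q*f1^2 - 2*q*f*f2 + qpp*f^2)"
  have X: "(f2 - q*f)^2 \<ge> ?X" using e h12 h3' h4' by linarith
  have Y: "?X = f^2*(m^4 + m^2/(2*r^2) + 9/(16*r^4))
     + (-2*q*f1^2 - 2*q*f*f2 + qpp*f^2) + (f1*f2/r - f1^2/(2*r^2))
     + (3*f*f1/r^3 - 9*f^2/(2*r^4))/4 + 2*m^2*(f*f1/r - f^2/(2*r^2))
     + 2*c*(4*f*f1*ch/sh^3 + 2*f^2*(sh^2 - 3*ch^2)/sh^4) + c*((2*m^2-4)*(f^2/sh^2) + (c-2)*(f^2/sh^4))"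
    using r sh by (simp add: field_simps eval_nat_numeral)
  show ?thesis using X Y p by linarith
qed


lemma dD1:
  assumes "(F has_real_derivative F') (at x)" "x \<noteq> 0"
  shows "((\<lambda>x. F x^2/(2*x)) has_real_derivative (F x * F' / x - F x^2/(2*x^2))) (at x)"
  using assms(2) by (auto intro!: derivative_eq_intros assms(1) simp: field_simps eval_nat_numeral)

lemma dD2:
  assumes "(F has_real_derivative F') (at x)" "x \<noteq> 0"
  shows "((\<lambda>x. 3*F x^2/(2*x^3)) has_real_derivative (3*F x*F'/x^3 - 9*F x^2/(2*x^4))) (at x)"
  using assms(2) by (auto intro!: derivative_eq_intros assms(1) simp: field_simps eval_nat_numeral)

lemma dD4:
  assumes "(F has_real_derivative F') (at x)" "x > 0"
  shows "((\<lambda>x. 2*F x^2*cosh x/sinh x^3) has_real_derivative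
     (4*F x*F'*cosh x/sinh x^3 + 2*F x^2*(sinh x^2 - 3*cosh x^2)/sinh x^4)) (at x)"
proof -
  have "sinh x > 0" using assms(2) by simp
  thus ?thesis by (auto intro!: derivative_eq_intros assms(1) simp: field_simps eval_nat_numeral)
qed

lemma dq:
  assumes "x > 0"
  shows "((\<lambda>x. m^2 + c/sinh x^2) has_real_derivative (-2*c*cosh x/sinh x^3)) (at x)"
proof -
  have "sinh x > 0" using assms by simp
  thus ?thesis by (auto intro!: derivative_eq_intros simp: field_simps eval_nat_numeral)
qed

lemma dq':
  assumes "x > 0"
  shows "((\<lambda>x. -2*c*cosh x/sinh x^3) has_real_derivative (c*(4/sinh x^2 + 6/sinh x^4))) (at x)"
proof -
  have s: "sinh x > 0" using assms by simp
  have ch: "cosh x ^2 = 1 + sinh x^2" by (simp add: cosh_square_eq)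
  have "((\<lambda>x. -2*c*cosh x/sinh x^3) has_real_derivative
      (-2*c*(sinh x * sinh x^3 - cosh x * (3 * sinh x^2 * cosh x))/(sinh x^3)^2)) (at x)"
    using s apply (auto intro!: derivative_eq_intros simp: eval_nat_numeral)
    apply (simp add: algebra_simps)
    done
  moreover have "-2*c*(sinh x * sinh x^3 - cosh x * (3 * sinh x^2 * cosh x))/(sinh x^3)^2
      = c*(4/sinh x^2 + 6/sinh x^4)"
  proof -
    have "cosh x * (3 * sinh x^2 * cosh x) = 3 * sinh x^2 * cosh x^2" by (simp add: power2_eq_square)
    also have "\<dots> = 3 * sinh x^2 * (1 + sinh x^2)" by (simp only: ch)
    finally have "cosh x * (3 * sinh x^2 * cosh x) = 3 * sinh x^2 * (1 + sinh x^2)" .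
    thus ?thesis using s by (simp add: field_simps eval_nat_numeral)
  qed
  ultimately show ?thesis by simp
qed

lemma dD0:
  assumes "(F has_real_derivative F1 x) (at x)" "(F1 has_real_derivative F2) (at x)"
    "(Q has_real_derivative Q1 x) (at x)" "(Q1 has_real_derivative Q2) (at x)"
  shows "((\<lambda>x. -2*Q x*F x*F1 x + Q1 x*F x^2) has_real_derivative
     (-2*Q x*F1 x^2 - 2*Q x*F x*F2 + Q2*F x^2)) (at x)"
  apply (auto intro!: derivative_eq_intros assms simp: eval_nat_numeral)
  apply (simp add: algebra_simps)
  done



lemma ineq_by_deriv:
  fixes L R g G :: "real \<Rightarrow> real"
  assumes "\<alpha> \<le> \<beta>" "continuous_on {\<alpha>..\<beta>} L" "continuous_on {\<alpha>..\<beta>} R"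
    "\<And>x. x \<in> {\<alpha>..\<beta>} \<Longrightarrow> (G has_real_derivative g x) (at x)"
    "G \<alpha> = 0" "G \<beta> = 0"
    "\<And>x. x \<in> {\<alpha>..\<beta>} \<Longrightarrow> R x + g x \<le> L x"
  shows "integral {\<alpha>..\<beta>} R \<le> integral {\<alpha>..\<beta>} L"
proof -
  have "(g has_integral (G \<beta> - G \<alpha>)) {\<alpha>..\<beta>}"
    apply (rule fundamental_theorem_of_calculus[OF assms(1)])
    using assms(4) by (simp add: has_real_derivative_iff_has_vector_derivative[symmetric] has_field_derivative_at_within)
  hence g0: "(g has_integral 0) {\<alpha>..\<beta>}" using assms by simp
  have iR: "(R has_integral integral {\<alpha>..\<beta>} R) {\<alpha>..\<beta>}"
    using assms(3) integrable_continuous_interval by blast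
  have iL: "(L has_integral integral {\<alpha>..\<beta>} L) {\<alpha>..\<beta>}"
    using assms(2) integrable_continuous_interval by blast
  have "((\<lambda>x. R x + g x) has_integral (integral {\<alpha>..\<beta>} R + 0)) {\<alpha>..\<beta>}"
    by (rule has_integral_add[OF iR g0])
  thus ?thesis using has_integral_le[OF _ iL assms(7)] by simp
qed

lemma rellich_r:
  fixes k :: nat and U U1 U2 :: "real \<Rightarrow> real" and \<alpha> \<beta> :: real
  assumes k: "k \<ge> 4" and a0: "0 < \<alpha>" and ab: "\<alpha> \<le> \<beta>"
    and dU: "\<And>x. x \<in> {\<alpha>..\<beta>} \<Longrightarrow> (U has_real_derivative U1 x) (at x)"
    and dU1: "\<And>x. x \<in> {\<alpha>..\<beta>} \<Longrightarrow> (U1 has_real_derivative U2 x) (at x)"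
    and cU2: "continuous_on {\<alpha>..\<beta>} U2"
    and bd: "U \<alpha> = 0" "U \<beta> = 0" "U1 \<alpha> = 0" "U1 \<beta> = 0"
  shows "integral {\<alpha>..\<beta>} (\<lambda>r. U r^2 * sinh r^k * ((real k/2)^4 + (real k/2)^2/(2*r^2) + 9/(16*r^4)))
      \<le> integral {\<alpha>..\<beta>} (\<lambda>r. (U2 r + real k * (cosh r/sinh r) * U1 r)^2 * sinh r^k)"
proof -
  define m where "m = real k / 2"
  define c where "c = m^2 - m"
  have m2: "m \<ge> 2" using k unfolding m_def by simp
  define P where "P x = sinh x powr m" for x
  define P1 where "P1 x = m * cosh x / sinh x * P x" for x
  define q where "q x = m^2 + c/sinh x^2" for x
  define q1 where "q1 x = -2*c*cosh x/sinh x^3" for x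
  define q2 where "q2 x = c*(4/sinh x^2 + 6/sinh x^4)" for x
  define f where "f x = P x * U x" for x
  define f1 where "f1 x = P1 x * U x + P x * U1 x" for x
  define f2 where "f2 x = q x * P x * U x + 2 * P1 x * U1 x + P x * U2 x" for x
  have pos: "x \<in> {\<alpha>..\<beta>} \<Longrightarrow> x > 0" for x using a0 by auto
  have dP: "(P has_real_derivative P1 x) (at x)" if "x > 0" for x
  proof -
    have s: "sinh x > 0" using that by simp
    have "(P has_real_derivative (m * sinh x powr (m - 1) * cosh x)) (at x)"
      unfolding P_def using s by (auto intro!: derivative_eq_intros)
    moreover have "m * sinh x powr (m - 1) * cosh x = P1 x"
      unfolding P1_def P_def using s by (simp add: powr_diff)
    ultimately show ?thesis by simp
  qed
  have dP1: "(P1 has_real_derivative (q x * P x)) (at x)" if "x > 0" for x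
  proof -
    have s: "sinh x > 0" using that by simp
    have ch: "cosh x ^2 = 1 + sinh x^2" by (simp add: cosh_square_eq)
    have "(P1 has_real_derivative (m * ((sinh x * sinh x - cosh x * cosh x)/(sinh x)^2) * P x
        + m * cosh x / sinh x * P1 x)) (at x)"
      unfolding P1_def[abs_def] using s
      by (auto intro!: derivative_eq_intros dP[OF that, unfolded P1_def] simp: P1_def field_simps power2_eq_square)
    moreover have "m * ((sinh x * sinh x - cosh x * cosh x)/(sinh x)^2) * P x
        + m * cosh x / sinh x * P1 x = q x * P x"
    proof -
      have "cosh x * cosh x = 1 + sinh x * sinh x" using ch by (simp add: power2_eq_square)
      thus ?thesis unfolding P1_def q_def c_def using s
        by (simp add: field_simps power2_eq_square)
    qed
    ultimately show ?thesis by simp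
  qed
  have df: "(f has_real_derivative f1 x) (at x)" if "x \<in> {\<alpha>..\<beta>}" for x
    unfolding f_def[abs_def] f1_def
    by (auto intro!: derivative_eq_intros dP dU that pos)
  have df1: "(f1 has_real_derivative f2 x) (at x)" if "x \<in> {\<alpha>..\<beta>}" for x
    unfolding f1_def[abs_def] f2_def
    by (auto intro!: derivative_eq_intros dP dP1 dU dU1 that pos simp: algebra_simps)
  have dq_: "(q has_real_derivative q1 x) (at x)" if "x > 0" for x
    using dq[OF that] unfolding q_def[abs_def] q1_def .
  have dq1_: "(q1 has_real_derivative q2 x) (at x)" if "x > 0" for x
    using dq'[OF that] unfolding q1_def[abs_def] q2_def .
  define G where "G x = (-2*q x*f x*f1 x + q1 x*f x^2) + f1 x^2/(2*x) + (3*f x^2/(2*x^3))/4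
     + 2*m^2*(f x^2/(2*x)) + 2*c*(2*f x^2*cosh x/sinh x^3)" for x
  define g where "g x = (-2*q x*f1 x^2 - 2*q x*f x*f2 x + q2 x*f x^2) + (f1 x*f2 x/x - f1 x^2/(2*x^2))
     + (3*f x*f1 x/x^3 - 9*f x^2/(2*x^4))/4 + 2*m^2*(f x*f1 x/x - f x^2/(2*x^2))
     + 2*c*(4*f x*f1 x*cosh x/sinh x^3 + 2*f x^2*(sinh x^2 - 3*cosh x^2)/sinh x^4)" for x
  have dG: "(G has_real_derivative g x) (at x)" if x: "x \<in> {\<alpha>..\<beta>}" for x
    unfolding G_def[abs_def] g_def
    by (intro DERIV_add DERIV_cmult DERIV_cdivide dD0 dD1 dD2 dD4 df df1 dq_ dq1_ x pos[OF x]) (use pos[OF x] in auto)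
  have G0: "G \<alpha> = 0" "G \<beta> = 0" unfolding G_def f_def f1_def using bd by simp_all
  have PP: "P x ^2 = sinh x ^ k" if "x > 0" for x
  proof -
    have s: "sinh x > 0" using that by simp
    have "P x ^2 = sinh x powr (m + m)" unfolding P_def power2_eq_square powr_add ..
    also have "m + m = real k" unfolding m_def by simp
    finally show ?thesis using s by (simp add: powr_realpow)
  qed
  have cU: "continuous_on {\<alpha>..\<beta>} U"
    by (rule continuous_at_imp_continuous_on) (use dU DERIV_isCont in blast)
  have cU1: "continuous_on {\<alpha>..\<beta>} U1"
    by (rule continuous_at_imp_continuous_on) (use dU1 DERIV_isCont in blast)
  show ?thesis
  proof (rule ineq_by_deriv[OF ab _ _ dG G0])
    show "continuous_on {\<alpha>..\<beta>} (\<lambda>r. (U2 r + real k * (cosh r/sinh r) * U1 r)^2 * sinh r^k)"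
      by (intro continuous_intros cU cU1 cU2) (use pos in force)
    show "continuous_on {\<alpha>..\<beta>} (\<lambda>r. U r^2 * sinh r^k * ((real k/2)^4 + (real k/2)^2/(2*r^2) + 9/(16*r^4)))"
      by (intro continuous_intros cU) (use pos in force)+
  next
    fix x assume x: "x \<in> {\<alpha>..\<beta>}"
    have x0: "x > 0" using pos[OF x] .
    have s: "sinh x > 0" using x0 by simp
    have ch: "cosh x ^2 = 1 + sinh x^2" by (simp add: cosh_square_eq)
    have key: "(f2 x - q x * f x)^2 \<ge> f x^2*(m^4 + m^2/(2*x^2) + 9/(16*x^4)) + g x"
      using pw[OF x0 s m2 c_def q_def q2_def ch, of "f x" "f1 x" "f2 x"] unfolding g_def by linarith
    have e1: "f2 x - q x * f x = P x * (U2 x + real k * (cosh x/sinh x) * U1 x)"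
      unfolding f2_def f_def P1_def m_def by (simp add: algebra_simps)
    have L: "(f2 x - q x * f x)^2 = (U2 x + real k * (cosh x/sinh x) * U1 x)^2 * sinh x^k"
      unfolding e1 power_mult_distrib PP[OF x0] by simp
    have R: "f x^2*(m^4 + m^2/(2*x^2) + 9/(16*x^4)) = U x^2 * sinh x^k * ((real k/2)^4 + (real k/2)^2/(2*x^2) + 9/(16*x^4))"
      unfolding f_def power_mult_distrib PP[OF x0] m_def by simp
    show "U x^2 * sinh x^k * ((real k/2)^4 + (real k/2)^2/(2*x^2) + 9/(16*x^4)) + g x
        \<le> (U2 x + real k * (cosh x/sinh x) * U1 x)^2 * sinh x^k"
      using key L R by simp
  qed
qed



lemma sinh_lower:
  fixes r \<sigma> :: real
  assumes "0 < r" "r \<le> \<sigma>"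
  shows "exp \<sigma> * (1 - exp (-2*r)) / 2 \<le> sinh \<sigma>"
proof -
  have "exp (-2*\<sigma>) \<le> exp (-2*r)" using assms by simp
  hence "exp \<sigma> * (1 - exp (-2*r)) \<le> exp \<sigma> * (1 - exp (-2*\<sigma>))"
    by (intro mult_left_mono) auto
  also have "\<dots> = exp \<sigma> - exp (-\<sigma>)"
    by (simp add: algebra_simps exp_add[symmetric])
  finally show ?thesis by (simp add: sinh_def)
qed

lemma gg_bound:
  fixes r \<sigma> :: real
  assumes "0 < r" "r \<le> \<sigma>"
  shows "1 / sinh \<sigma> ^ k \<le> (2/(1 - exp (-2*r)))^k * exp (-(real k)*\<sigma>)"
proof -
  have c0: "1 - exp (-2*r) > 0" using assms by simp
  have s0: "0 < exp \<sigma> * (1 - exp (-2*r)) / 2" using c0 by simp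
  have "1 / sinh \<sigma> \<le> 1 / (exp \<sigma> * (1 - exp (-2*r)) / 2)"
    using sinh_lower[OF assms] s0 assms by (intro divide_left_mono) (auto intro!: mult_pos_pos)
  also have "\<dots> = (2/(1 - exp (-2*r))) * exp (-\<sigma>)"
    by (simp add: exp_minus field_simps)
  finally have "(1 / sinh \<sigma>)^k \<le> ((2/(1 - exp (-2*r))) * exp (-\<sigma>))^k"
    using assms by (intro power_mono) auto
  also have "\<dots> = (2/(1 - exp (-2*r)))^k * exp (-(real k)*\<sigma>)"
  proof -
    have "exp (-\<sigma>)^k = exp (-(real k)*\<sigma>)" using exp_of_nat_mult[of k "-\<sigma>"] by simp
    thus ?thesis by (simp only: power_mult_distrib)
  qed
  finally show ?thesis by (simp add: power_one_over)
qed

lemma gg_int: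
  fixes r :: real
  assumes "0 < r" "k > 0"
  shows "(\<lambda>\<sigma>. 1 / sinh \<sigma> ^ k) integrable_on {r..}"
proof (rule integrable_on_all_intervals_integrable_bound)
  fix a b :: real
  have "(\<lambda>\<sigma>. 1 / sinh \<sigma> ^ k) integrable_on {max r a..b}"
    using assms by (intro integrable_continuous_interval continuous_intros) auto
  thus "(\<lambda>x. if x \<in> {r..} then 1 / sinh x ^ k else 0) integrable_on cbox a b"
    unfolding integrable_restrict_Int by (simp add: Int_atLeastAtMost Int_commute)
next
  fix x assume "x \<in> {r..}"
  thus "norm (1 / sinh x ^ k) \<le> (2/(1 - exp (-2*r)))^k * exp (-(real k)*x)"
    using gg_bound[of r x k] assms by auto
next
  show "(\<lambda>x. (2/(1 - exp (-2*r)))^k * exp (-(real k)*x)) integrable_on {r..}"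
    using assms integrable_cmul[OF integrable_on_exp_minus_to_infinity[of "real k" r], of "(2/(1 - exp (-2*r)))^k"]
    by simp
qed

definition FF :: "nat \<Rightarrow> real \<Rightarrow> real" where
  "FF k r = integral {r..} (\<lambda>\<sigma>. 1 / sinh \<sigma> ^ k)"

lemma FF_split:
  assumes "0 < r" "r \<le> t" "k > 0"
  shows "FF k r = integral {r..t} (\<lambda>\<sigma>. 1 / sinh \<sigma> ^ k) + FF k t"
proof -
  let ?g = "\<lambda>\<sigma>::real. 1 / sinh \<sigma> ^ k"
  have i1: "(?g has_integral integral {r..t} ?g) {r..t}"
    using assms by (intro integrable_integral integrable_continuous_interval continuous_intros) auto
  have i2: "(?g has_integral FF k t) {t..}"
    unfolding FF_def using assms by (intro integrable_integral gg_int) auto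
  have "negligible ({r..t} \<inter> {t..})"
    using assms by (simp add: Int_atLeastAtMost) 
  note has_integral_Un[OF i1 i2 this]
  moreover have "{r..t} \<union> {t..} = {r..}" using assms by auto
  ultimately have "(?g has_integral (integral {r..t} ?g + FF k t)) {r..}"
    by simp
  thus ?thesis unfolding FF_def by (rule integral_unique)
qed

lemma FF_deriv:
  assumes "0 < r" "k > 0"
  shows "(FF k has_real_derivative -(1 / sinh r ^ k)) (at r)"
proof -
  let ?g = "\<lambda>\<sigma>::real. 1 / sinh \<sigma> ^ k"
  have c: "continuous_on {r/2..2*r} ?g"
    using assms by (intro continuous_intros) auto
  have "((\<lambda>x. integral {x..2*r} ?g) has_real_derivative -?g r) (at r within {r/2..2*r})"
    using assms by (intro integral_has_real_derivative' c) auto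
  moreover have "at r within {r/2..2*r} = at r"
    using assms by (intro at_within_Icc_at) auto
  ultimately have d: "((\<lambda>x. integral {x..2*r} ?g + FF k (2*r)) has_real_derivative -?g r) (at r)"
    by (auto intro!: derivative_eq_intros)
  show ?thesis
  proof (rule has_field_derivative_transform_within_open[OF d, of "{r/2<..<2*r}"])
    show "r \<in> {r/2<..<2*r}" using assms by auto
    fix x assume "x \<in> {r/2<..<2*r}"
    thus "integral {x..2*r} ?g + FF k (2*r) = FF k x"
      using FF_split[of x "2*r" k] assms by auto
  qed simp
qed

lemma FF_nonneg:
  assumes "0 < r" "k > 0"
  shows "FF k r \<ge> 0"
  unfolding FF_def using assms by (intro integral_nonneg gg_int) auto

lemma FF_pos:
  assumes "0 < r" "k > 0"
  shows "FF k r > 0"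
proof -
  let ?g = "\<lambda>\<sigma>::real. 1 / sinh \<sigma> ^ k"
  have "integral {r..r+1} (\<lambda>_. ?g (r+1)) \<le> integral {r..r+1} ?g"
  proof (rule integral_le)
    show "?g integrable_on {r..r+1}"
      using assms by (intro integrable_continuous_interval continuous_intros) auto
    fix x assume x: "x \<in> {r..r+1}"
    hence "sinh x ^ k \<le> sinh (r+1) ^ k" "sinh x ^ k > 0" using assms by (auto intro!: power_mono)
    thus "?g (r+1) \<le> ?g x" by (intro divide_left_mono) auto
  qed auto
  moreover have "?g (r+1) > 0" using assms by simp
  moreover have "integral {r..r+1} (\<lambda>_. ?g (r+1)) = ?g (r+1)" by simp
  ultimately have "integral {r..r+1} ?g > 0" by linarith
  thus ?thesis using FF_split[of r "r+1" k] FF_nonneg[of "r+1" k] assms by simp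
qed

lemma sinh_upper:
  fixes \<sigma> :: real
  assumes "0 \<le> \<sigma>" "\<sigma> \<le> 1/2"
  shows "sinh \<sigma> \<le> 2*\<sigma>"
proof -
  have e1: "1 - \<sigma> \<le> exp (-\<sigma>)" using exp_ge_add_one_self[of "-\<sigma>"] by simp
  have "exp \<sigma> = 1 / exp (-\<sigma>)" by (simp add: exp_minus field_simps)
  also have "\<dots> \<le> 1 / (1 - \<sigma>)" using e1 assms by (intro divide_left_mono) auto
  also have "\<dots> \<le> 1 + 2*\<sigma>"
  proof -
    have "\<sigma>*(2*\<sigma>) \<le> \<sigma>*1" using assms by (intro mult_left_mono) auto
    hence "1 \<le> (1 + 2*\<sigma>) * (1 - \<sigma>)" by (simp add: algebra_simps)
    thus ?thesis using assms by (simp add: field_simps)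
  qed
  finally have "exp \<sigma> \<le> 1 + 2*\<sigma>" .
  hence "exp \<sigma> - exp (-\<sigma>) \<le> 4*\<sigma>" using e1 assms by linarith
  thus ?thesis unfolding sinh_field_def by simp
qed

lemma FF_lower:
  assumes "0 < \<alpha>" "\<alpha> \<le> 1/4" "k > 0"
  shows "FF k \<alpha> \<ge> \<alpha> / (4*\<alpha>)^k"
proof -
  let ?g = "\<lambda>\<sigma>::real. 1 / sinh \<sigma> ^ k"
  have "integral {\<alpha>..2*\<alpha>} (\<lambda>_. 1/(4*\<alpha>)^k) \<le> integral {\<alpha>..2*\<alpha>} ?g"
  proof (rule integral_le)
    show "?g integrable_on {\<alpha>..2*\<alpha>}"
      using assms by (intro integrable_continuous_interval continuous_intros) auto
    fix x assume x: "x \<in> {\<alpha>..2*\<alpha>}"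
    hence "sinh x \<le> 4*\<alpha>" using sinh_upper[of x] assms by auto
    moreover have "sinh x \<ge> 0" using x assms by simp
    ultimately have "sinh x ^ k \<le> (4*\<alpha>) ^ k" by (rule power_mono)
    moreover have "sinh x ^ k > 0" using assms x by auto
    ultimately show "1/(4*\<alpha>)^k \<le> ?g x" by (intro divide_left_mono) auto
  qed auto
  hence "\<alpha> / (4*\<alpha>)^k \<le> integral {\<alpha>..2*\<alpha>} ?g" using assms by simp
  thus ?thesis using FF_split[of \<alpha> "2*\<alpha>" k] FF_nonneg[of "2*\<alpha>" k] assms by simp
qed


lemma div_le_self_real: "0 \<le> (x::real) \<Longrightarrow> 1 \<le> c \<Longrightarrow> x / c \<le> x"
  by (simp add: divide_le_eq mult_le_cancel_left1)

lemma FF_upper: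
  assumes "1 \<le> \<beta>" "k > 0"
  shows "FF k \<beta> \<le> 4^k * exp (-\<beta>)"
proof -
  let ?g = "\<lambda>\<sigma>::real. 1 / sinh \<sigma> ^ k"
  have e2: "exp (-2*\<beta>) \<le> 1/2"
  proof -
    have "3 \<le> exp (2*\<beta>)" using exp_ge_add_one_self[of "2*\<beta>"] assms by linarith
    thus ?thesis by (simp add: exp_minus field_simps)
  qed
  have C: "2/(1 - exp (-2*\<beta>)) \<le> 4"
  proof -
    have p: "1 - exp (-2*\<beta>) > 0" using e2 by linarith
    have "2 \<le> 4 * (1 - exp (-2*\<beta>))" using e2 by (simp add: algebra_simps)
    thus ?thesis by (simp only: pos_divide_le_eq[OF p])
  qed
  have hi: "((\<lambda>x. 4^k * exp (-(real k)*x)) has_integral 4^k * (exp (-(real k)*\<beta>)/real k)) {\<beta>..}"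
    using has_integral_exp_minus_to_infinity[of "real k" \<beta>] assms
    by (intro has_integral_mult_right) auto
  have "FF k \<beta> \<le> 4^k * (exp (-(real k)*\<beta>)/real k)"
    unfolding FF_def
  proof (rule has_integral_le[OF integrable_integral[OF gg_int] hi])
    fix x assume x: "x \<in> {\<beta>..}"
    have "?g x \<le> (2/(1 - exp (-2*\<beta>)))^k * exp (-(real k)*x)"
      using gg_bound[of \<beta> x k] x assms by auto
    also have "\<dots> \<le> 4^k * exp (-(real k)*x)"
    proof -
      have "1 - exp (-2*\<beta>) > 0" using e2 by linarith
      hence "0 \<le> 2/(1 - exp (-2*\<beta>))" by (intro divide_nonneg_pos) auto
      thus ?thesis using C by (intro mult_right_mono power_mono) auto
    qed
    finally show "?g x \<le> 4^k * exp (-(real k)*x)" .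
  qed (use assms in auto)
  also have "\<dots> \<le> 4^k * exp (-\<beta>)"
  proof -
    have k1: "real k \<ge> 1" using assms by simp
    have "-(real k)*\<beta> \<le> -\<beta>" using k1 assms by (simp add: mult_right_mono)
    hence a: "exp (-(real k)*\<beta>) \<le> exp (-\<beta>)" by (rule exp_mono)
    have "exp (-(real k)*\<beta>)/real k \<le> exp (-(real k)*\<beta>)"
      by (rule div_le_self_real) (use k1 in auto)
    hence "exp (-(real k)*\<beta>)/real k \<le> exp (-\<beta>)" using a by linarith
    thus ?thesis by (intro mult_left_mono) auto
  qed
  finally show ?thesis .
qed



definition SS :: "nat \<Rightarrow> real \<Rightarrow> real" where
  "SS k r = ((real k - 1) * FF k r) powr (-1 / (real k - 1))"

lemma SS_pos: "0 < r \<Longrightarrow> 2 \<le> k \<Longrightarrow> SS k r > 0"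
  unfolding SS_def using FF_pos[of r k] by simp

lemma SS_deriv:
  assumes "0 < r" "2 \<le> k"
  shows "(SS k has_real_derivative (SS k r ^ k / sinh r ^ k)) (at r)"
proof -
  define e where "e = -1 / (real k - 1)"
  define X where "X r = (real k - 1) * FF k r" for r
  have k1: "real k - 1 > 0" using assms by simp
  have Xp: "X r > 0" unfolding X_def using FF_pos[of r k] assms k1 by simp
  have dX: "(X has_real_derivative ((real k - 1) * (-(1 / sinh r ^ k)))) (at r)"
    unfolding X_def[abs_def] using FF_deriv[of r k] assms by (auto intro!: derivative_eq_intros)
  have d: "((\<lambda>r. X r powr e) has_real_derivative (e * X r powr (e - 1) * ((real k - 1) * (-(1 / sinh r ^ k))))) (at r)"
    using DERIV_chain2[OF has_real_derivative_powr[OF Xp] dX] by simp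
  have ek: "e * (real k - 1) = -1" unfolding e_def using k1 by simp
  have e1: "e * X r powr (e - 1) * ((real k - 1) * (-(1 / sinh r ^ k))) = (e * (real k - 1)) * (-(X r powr (e - 1) / sinh r ^ k))"
    by (simp add: algebra_simps)
  have e2: "e - 1 = real k * e" unfolding e_def using k1 by (simp add: field_simps)
  have e3: "X r powr (real k * e) = (X r powr e) ^ k" using Xp by (simp add: powr_power)
  have eq: "e * X r powr (e - 1) * ((real k - 1) * (-(1 / sinh r ^ k))) = (X r powr e) ^ k / sinh r ^ k"
    unfolding e1 ek by (subst e2, subst e3, simp)
  have "SS k = (\<lambda>r. X r powr e)" unfolding SS_def[abs_def] X_def e_def ..
  thus ?thesis using d unfolding eq by simp
qed

lemma SS_strict_mono:
  assumes "0 < x" "x < y" "2 \<le> k"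
  shows "SS k x < SS k y"
proof (rule DERIV_pos_imp_increasing[OF assms(2)])
  fix t assume t: "x \<le> t" "t \<le> y"
  hence t0: "t > 0" using assms by simp
  show "\<exists>d. DERIV (SS k) t :> d \<and> d > 0"
    using SS_deriv[OF t0 assms(3)] SS_pos[OF t0 assms(3)] t0 by auto
qed

lemma SS_mono:
  assumes "0 < x" "x \<le> y" "2 \<le> k"
  shows "SS k x \<le> SS k y"
  using SS_strict_mono[of x y k] assms by (cases "x = y") auto

lemma SS_inj: "2 \<le> k \<Longrightarrow> inj_on (SS k) {0<..}"
  by (rule inj_onI) (metis SS_strict_mono greaterThan_iff linorder_neqE_linordered_idom order_less_irrefl)


lemma half_less: "0 < (c::real) \<Longrightarrow> c/2 < c" by simp

lemma SS_small:
  assumes "0 < a" "2 \<le> k"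
  shows "\<exists>\<alpha>>0. SS k \<alpha> < a"
proof -
  have k1: "real k - 1 > 0" using assms by simp
  define A where "A = a powr (-(real k - 1))"
  have A0: "A > 0" unfolding A_def using assms by simp
  define \<alpha> where "\<alpha> = min (1/4) ((real k - 1)/(4^k * A)/2)"
  have a0: "\<alpha> > 0" unfolding \<alpha>_def using A0 k1 by simp
  have a1: "\<alpha> \<le> 1/4" unfolding \<alpha>_def by simp
  have c0: "(real k - 1)/(4^k * A) > 0" using A0 k1 by simp
  have "\<alpha> \<le> (real k - 1)/(4^k * A)/2" unfolding \<alpha>_def by simp
  moreover have "(real k - 1)/(4^k * A)/2 < (real k - 1)/(4^k * A)" using half_less[OF c0] .
  ultimately have a2: "\<alpha> < (real k - 1)/(4^k * A)" by (rule order_le_less_trans)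
  have "\<alpha>^k \<le> \<alpha>^2" using a0 a1 assms by (intro power_decreasing) auto
  hence "(4*\<alpha>)^k \<le> 4^k * \<alpha>^2" by (simp add: power_mult_distrib)
  hence "\<alpha> / (4^k * \<alpha>^2) \<le> \<alpha> / (4*\<alpha>)^k" using a0 by (intro divide_left_mono) auto
  also have "\<dots> \<le> FF k \<alpha>" using FF_lower[of \<alpha> k] a0 a1 assms by simp
  finally have f1: "1 / (4^k * \<alpha>) \<le> FF k \<alpha>" using a0 by (simp add: power2_eq_square)
  have "A < (real k - 1) / (4^k * \<alpha>)" using a2 a0 A0 k1 by (simp add: field_simps)
  also have "\<dots> = (real k - 1) * (1 / (4^k * \<alpha>))" by simp
  also have "\<dots> \<le> (real k - 1) * FF k \<alpha>" using f1 k1 by (intro mult_left_mono) auto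
  finally have XA: "A < (real k - 1) * FF k \<alpha>" .
  have "SS k \<alpha> < A powr (-1 / (real k - 1))"
    unfolding SS_def using XA A0 k1 by (intro powr_less_mono2_neg) auto
  also have "A powr (-1 / (real k - 1)) = a"
  proof -
    have "(-(real k - 1)) * (-1 / (real k - 1)) = 1" using k1 by (simp add: field_simps)
    thus ?thesis unfolding A_def powr_powr using assms by simp
  qed
  finally show ?thesis using a0 by blast
qed

lemma SS_large:
  assumes "0 < b" "2 \<le> k"
  shows "\<exists>\<beta>\<ge>1. SS k \<beta> > b"
proof -
  have k1: "real k - 1 > 0" using assms by simp
  define B where "B = b powr (-(real k - 1))"
  have B0: "B > 0" unfolding B_def using assms by simp
  define \<beta> where "\<beta> = max 1 (- ln (B / ((real k - 1) * 4^k)) + 1)"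
  have b1: "\<beta> \<ge> 1" unfolding \<beta>_def by simp
  have "-\<beta> < ln (B / ((real k - 1) * 4^k))" unfolding \<beta>_def by simp
  hence "exp (-\<beta>) < B / ((real k - 1) * 4^k)"
    using B0 k1 by (metis exp_less_mono exp_ln divide_pos_pos mult_pos_pos zero_less_numeral zero_less_power)
  hence e: "(real k - 1) * 4^k * exp (-\<beta>) < B" using k1 by (simp add: field_simps)
  have "(real k - 1) * FF k \<beta> \<le> (real k - 1) * (4^k * exp (-\<beta>))"
    using FF_upper[of \<beta> k] b1 assms k1 by (intro mult_left_mono) auto
  hence XB: "(real k - 1) * FF k \<beta> < B" using e by (simp add: algebra_simps)
  have X0: "(real k - 1) * FF k \<beta> > 0" using FF_pos[of \<beta> k] b1 assms k1 by simp
  have "B powr (-1 / (real k - 1)) < SS k \<beta>"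
    unfolding SS_def using XB X0 k1 by (intro powr_less_mono2_neg) auto
  also have "B powr (-1 / (real k - 1)) = b"
  proof -
    have "(-(real k - 1)) * (-1 / (real k - 1)) = 1" using k1 by (simp add: field_simps)
    thus ?thesis unfolding B_def powr_powr using assms by simp
  qed
  finally show ?thesis using b1 by blast
qed



lemma deriv_zero_open:
  assumes "open S" "x \<in> S" "\<And>y. y \<in> S \<Longrightarrow> f y = 0" "(f has_real_derivative D) (at x)"
  shows "D = 0"
proof -
  have "((\<lambda>_. 0::real) has_real_derivative 0) (at x)" by simp
  hence "(f has_real_derivative 0) (at x)"
    by (rule has_field_derivative_transform_within_open[OF _ assms(1,2)]) (use assms(3) in auto)
  thus ?thesis using assms(4) DERIV_unique by blast
qed

lemma Cc_facts:
  assumes "Cc_inf_pos v"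
  obtains a b where "0 < a" "a \<le> b" "\<And>x. x \<notin> {a..b} \<Longrightarrow> v x = 0"
    "\<And>x. (v has_real_derivative deriv v x) (at x)"
    "\<And>x. (deriv v has_real_derivative deriv (deriv v) x) (at x)"
    "continuous_on UNIV (deriv v)" "continuous_on UNIV (deriv (deriv v))"
    "\<And>x. x \<notin> {a..b} \<Longrightarrow> deriv v x = 0"
    "\<And>x. x \<notin> {a..b} \<Longrightarrow> deriv (deriv v) x = 0"
proof -
  from assms obtain a b where ab: "0 < a" "a \<le> b" "\<And>x. x \<notin> {a..b} \<Longrightarrow> v x = 0"
    and dk: "\<And>k x. ((deriv ^^ k) v) differentiable (at x)"
    unfolding Cc_inf_pos_def by blast
  have d0: "(v has_real_derivative deriv v x) (at x)" for x
    using dk[of 0 x] by (simp add: DERIV_deriv_iff_real_differentiable)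
  have d1: "(deriv v has_real_derivative deriv (deriv v) x) (at x)" for x
    using dk[of 1 x] by (simp add: DERIV_deriv_iff_real_differentiable)
  have d2: "(deriv (deriv v)) differentiable (at x)" for x
    using dk[of 2 x] by (simp add: numeral_2_eq_2)
  have c1: "continuous_on UNIV (deriv v)"
    by (rule continuous_at_imp_continuous_on) (use d1 DERIV_isCont in blast)
  have c2: "continuous_on UNIV (deriv (deriv v))"
    by (rule continuous_at_imp_continuous_on) (use d2 differentiable_imp_continuous_within in blast)
  have o: "open (- {a..b})" by auto
  have z1: "deriv v x = 0" if "x \<notin> {a..b}" for x
    by (rule deriv_zero_open[OF o _ _ d0]) (use that ab(3) in auto)
  have z2: "deriv (deriv v) x = 0" if "x \<notin> {a..b}" for x
    by (rule deriv_zero_open[OF o _ _ d1]) (use that z1 in auto)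
  show ?thesis by (rule that[OF ab d0 d1 c1 c2 z1 z2])
qed



lemma transfer:
  fixes h \<sigma> S1 :: "real \<Rightarrow> real"
  assumes ab: "\<alpha> \<le> \<beta>" "\<sigma> \<alpha> \<le> \<sigma> \<beta>" "0 < \<sigma> \<alpha>"
    and d: "\<And>x. x \<in> {\<alpha>..\<beta>} \<Longrightarrow> (\<sigma> has_real_derivative S1 x) (at x)"
    and im: "\<sigma> ` {\<alpha>..\<beta>} \<subseteq> {\<sigma> \<alpha>..\<sigma> \<beta>}"
    and c: "continuous_on {\<sigma> \<alpha>..\<sigma> \<beta>} h"
    and z: "\<And>x. x \<notin> {\<sigma> \<alpha>..\<sigma> \<beta>} \<Longrightarrow> h x = 0"
  shows "integral {0<..} h = integral {\<alpha>..\<beta>} (\<lambda>x. S1 x * h (\<sigma> x))"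
proof -
  have "((\<lambda>x. S1 x *\<^sub>R h (\<sigma> x)) has_integral integral {\<sigma> \<alpha>..\<sigma> \<beta>} h) {\<alpha>..\<beta>}"
    by (rule has_integral_substitution[OF ab(1,2) im c]) (use d has_field_derivative_at_within in blast)
  hence e1: "integral {\<alpha>..\<beta>} (\<lambda>x. S1 x * h (\<sigma> x)) = integral {\<sigma> \<alpha>..\<sigma> \<beta>} h"
    by (simp add: integral_unique)
  have "(h has_integral integral {\<sigma> \<alpha>..\<sigma> \<beta>} h) {\<sigma> \<alpha>..\<sigma> \<beta>}"
    using c integrable_continuous_interval by blast
  hence "(h has_integral integral {\<sigma> \<alpha>..\<sigma> \<beta>} h) {0<..}"
    by (rule has_integral_on_superset) (use z ab in auto)
  thus ?thesis using e1 by (simp add: integral_unique)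
qed



lemma dquot:
  fixes p :: "real \<Rightarrow> real"
  assumes d: "(p has_real_derivative (p x ^ Suc j / sinh x ^ Suc j)) (at x)" and p0: "p x > 0" and x0: "x > 0"
  shows "((\<lambda>r. p r ^ Suc j / sinh r ^ Suc j) has_real_derivative
     (real (Suc j) * (p x ^ Suc j / sinh x ^ Suc j)^2 / p x - real (Suc j) * (cosh x / sinh x) * (p x ^ Suc j / sinh x ^ Suc j))) (at x)"
proof -
  have s0: "sinh x > 0" using x0 by simp
  have A: "((\<lambda>r. p r ^ Suc j) has_real_derivative (real (Suc j) * ((p x ^ Suc j / sinh x ^ Suc j) * p x ^ j))) (at x)"
    using DERIV_power[OF d, of "Suc j"] by (simp only: diff_Suc_Suc diff_zero)
  have ds: "((\<lambda>r. sinh r) has_real_derivative cosh x) (at x)" by (auto intro!: derivative_eq_intros)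
  have B: "((\<lambda>r. sinh r ^ Suc j) has_real_derivative (real (Suc j) * (cosh x * sinh x ^ j))) (at x)"
    using DERIV_power[OF ds, of "Suc j"] by (simp only: diff_Suc_Suc diff_zero)
  have C: "((\<lambda>r. p r ^ Suc j / sinh r ^ Suc j) has_real_derivative
     ((real (Suc j) * ((p x ^ Suc j / sinh x ^ Suc j) * p x ^ j)) * sinh x ^ Suc j - p x ^ Suc j * (real (Suc j) * (cosh x * sinh x ^ j)))
      / (sinh x ^ Suc j * sinh x ^ Suc j)) (at x)"
    using DERIV_divide[OF A B] s0 by simp
  have eq: "((real (Suc j) * ((p x ^ Suc j / sinh x ^ Suc j) * p x ^ j)) * sinh x ^ Suc j - p x ^ Suc j * (real (Suc j) * (cosh x * sinh x ^ j)))
      / (sinh x ^ Suc j * sinh x ^ Suc j) = real (Suc j) * (p x ^ Suc j / sinh x ^ Suc j)^2 / p x - real (Suc j) * (cosh x / sinh x) * (p x ^ Suc j / sinh x ^ Suc j)"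
    using p0 s0 by (simp add: field_simps power2_eq_square)
  show ?thesis using C[unfolded eq] .
qed

lemma id0:
  fixes p sh D LU S1 :: real
  assumes "p > 0" "sh > 0" "S1 = p^k / sh^k" "LU = S1^2 * D"
  shows "S1 * ((1 / (sh/p)^(2*k)) * D^2 * p^k) = LU^2 * sh^k"
proof -
  have e: "(sh/p)^(2*k) = (sh^k/p^k)^2" by (simp add: power_mult power_divide mult.commute[of 2 k])
  show ?thesis unfolding e assms(3,4) using assms(1,2) by (simp add: field_simps power2_eq_square)
qed

lemma id1:
  fixes p sh V S1 W :: real
  assumes "p > 0" "sh > 0" "S1 = p^k / sh^k"
  shows "S1 * ((sh/p)^(2*k) / W * V^2 * p^k) = V^2 * sh^k / W"
proof -
  have e: "(sh/p)^(2*k) = (sh^k/p^k)^2" by (simp add: power_mult power_divide mult.commute[of 2 k])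
  show ?thesis unfolding e assms(3) using assms(1,2) by (simp add: field_simps power2_eq_square)
qed



lemma integrable_cmul_real: "f integrable_on S \<Longrightarrow> (\<lambda>x. (c::real) * f x) integrable_on S"
  using integrable_cmul[of f S c] by simp

theorem proposition6p3:
  fixes N :: nat and v :: "real \<Rightarrow> real"
  assumes "N \<ge> 5" and "Cc_inf_pos v"
  shows "integral {0<..} (\<lambda>s. (1 / rho N s) * (rad_lap N v s)^2 * s ^ (N - 1))
     \<ge> (real N - 1)^4 / 16 * integral {0<..} (\<lambda>s. rho N s * (v s)^2 * s ^ (N - 1))
       + 9 / 16 * integral {0<..} (\<lambda>s. rho N s / (r_fun N s)^4 * (v s)^2 * s ^ (N - 1))
       + (real N - 1)^2 / 8 * integral {0<..} (\<lambda>s. rho N s / (r_fun N s)^2 * (v s)^2 * s ^ (N - 1))"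
proof -
  define k where "k = N - 1"
  have k4: "k \<ge> 4" and k2: "2 \<le> k" using assms(1) unfolding k_def by auto
  have rk: "real N - 1 = real k" using assms(1) unfolding k_def by (simp add: of_nat_diff)
  obtain j where kj: "k = Suc j" using k4 by (cases k) auto
  have sfun: "s_fun N = SS k"
  proof -
    have e: "real k - 1 = real N - 2" using assms(1) unfolding k_def by (simp add: of_nat_diff)
    show ?thesis unfolding fun_eq_iff s_fun_def SS_def FF_def e k_def[symmetric] by simp
  qed
  have rfun: "r_fun N = inv_into {0<..} (SS k)" unfolding r_fun_def sfun ..
  have rf: "r_fun N (SS k x) = x" if "x > 0" for x
    unfolding rfun using SS_inj[OF k2] that by (simp add: inv_into_f_f)
  obtain a b where ab: "0 < a" "a \<le> b" "\<And>x. x \<notin> {a..b} \<Longrightarrow> v x = 0"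
    and dv: "\<And>x. (v has_real_derivative deriv v x) (at x)"
    and ddv: "\<And>x. (deriv v has_real_derivative deriv (deriv v) x) (at x)"
    and c1: "continuous_on UNIV (deriv v)" and c2: "continuous_on UNIV (deriv (deriv v))"
    and z1: "\<And>x. x \<notin> {a..b} \<Longrightarrow> deriv v x = 0"
    and z2: "\<And>x. x \<notin> {a..b} \<Longrightarrow> deriv (deriv v) x = 0"
    using Cc_facts[OF assms(2)] by blast
  have c0: "continuous_on UNIV v"
    by (rule continuous_at_imp_continuous_on) (use dv DERIV_isCont in blast)
  obtain \<alpha> where a0: "\<alpha> > 0" and Sa: "SS k \<alpha> < a" using SS_small[OF ab(1) k2] by blast
  obtain \<beta> where b1: "\<beta> \<ge> 1" and Sb: "SS k \<beta> > b" using SS_large[of b k] ab k2 by auto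
  have ab': "\<alpha> \<le> \<beta>"
  proof (rule ccontr)
    assume "\<not> \<alpha> \<le> \<beta>"
    hence "SS k \<beta> \<le> SS k \<alpha>" using SS_mono[of \<beta> \<alpha> k] b1 k2 by auto
    thus False using Sa Sb ab by auto
  qed
  define c where "c = SS k \<alpha>"
  define d where "d = SS k \<beta>"
  have c0': "c > 0" unfolding c_def using SS_pos[OF a0 k2] .
  have cd: "c \<le> d" unfolding c_def d_def using SS_mono[OF a0 ab' k2] .
  have pos: "x \<in> {\<alpha>..\<beta>} \<Longrightarrow> x > 0" for x using a0 by auto
  have dS: "(SS k has_real_derivative (SS k x ^ k / sinh x ^ k)) (at x)" if "x \<in> {\<alpha>..\<beta>}" for x
    using SS_deriv[OF pos[OF that] k2] .
  have cS: "continuous_on {\<alpha>..\<beta>} (SS k)"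
    by (rule continuous_at_imp_continuous_on) (use dS DERIV_isCont in blast)
  have im: "SS k ` {\<alpha>..\<beta>} = {c..d}"
  proof
    show "SS k ` {\<alpha>..\<beta>} \<subseteq> {c..d}"
    proof
      fix y assume "y \<in> SS k ` {\<alpha>..\<beta>}"
      then obtain x where x: "x \<in> {\<alpha>..\<beta>}" "y = SS k x" by (rule imageE) simp
      have "SS k \<alpha> \<le> SS k x" using SS_mono[OF a0 _ k2] x by auto
      moreover have "SS k x \<le> SS k \<beta>" using SS_mono[OF pos[OF x(1)] _ k2] x by auto
      ultimately show "y \<in> {c..d}" unfolding c_def d_def x by simp
    qed
    show "{c..d} \<subseteq> SS k ` {\<alpha>..\<beta>}"
    proof
      fix y assume "y \<in> {c..d}"
      then obtain x where "\<alpha> \<le> x" "x \<le> \<beta>" "SS k x = y"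
        using IVT'[of "SS k" \<alpha> y \<beta>, OF _ _ ab' cS] unfolding c_def d_def by auto
      thus "y \<in> SS k ` {\<alpha>..\<beta>}" by auto
    qed
  qed
  have crf: "continuous_on {c..d} (r_fun N)"
  proof -
    have "\<forall>x\<in>{\<alpha>..\<beta>}. r_fun N (SS k x) = x" using rf pos by auto
    from continuous_on_inv[OF cS compact_Icc this] show ?thesis unfolding im .
  qed
  have rpos: "r_fun N s \<in> {\<alpha>..\<beta>}" if "s \<in> {c..d}" for s
  proof -
    have "s \<in> SS k ` {\<alpha>..\<beta>}" using that im by simp
    then obtain x where "x \<in> {\<alpha>..\<beta>}" "s = SS k x" by (rule imageE) simp
    thus ?thesis using rf pos by auto
  qed
  have Nk: "N - 1 = k" unfolding k_def ..
  define S1 where "S1 x = SS k x ^ k / sinh x ^ k" for x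
  define S2 where "S2 x = real k * S1 x^2 / SS k x - real k * (cosh x / sinh x) * S1 x" for x
  define U where "U x = v (SS k x)" for x
  define U1 where "U1 x = deriv v (SS k x) * S1 x" for x
  define U2 where "U2 x = deriv (deriv v) (SS k x) * S1 x * S1 x + deriv v (SS k x) * S2 x" for x
  have dS': "(SS k has_real_derivative S1 x) (at x)" if "x \<in> {\<alpha>..\<beta>}" for x
    using dS[OF that] unfolding S1_def .
  have dS1: "(S1 has_real_derivative S2 x) (at x)" if "x \<in> {\<alpha>..\<beta>}" for x
    using dquot[of "SS k" x j] dS[OF that] pos[OF that] SS_pos[OF pos[OF that] k2]
    unfolding S1_def[abs_def] S2_def kj by auto
  have dU: "(U has_real_derivative U1 x) (at x)" if "x \<in> {\<alpha>..\<beta>}" for x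
    using DERIV_chain2[OF dv dS'[OF that]] unfolding U_def[abs_def] U1_def by simp
  have dU1: "(U1 has_real_derivative U2 x) (at x)" if "x \<in> {\<alpha>..\<beta>}" for x
    using DERIV_mult[OF DERIV_chain2[OF ddv dS'[OF that]] dS1[OF that]] unfolding U1_def[abs_def] U2_def
    by (simp add: algebra_simps)
  have cS1: "continuous_on {\<alpha>..\<beta>} S1"
    by (rule continuous_at_imp_continuous_on) (use dS1 DERIV_isCont in blast)
  have imsub: "SS k ` {\<alpha>..\<beta>} \<subseteq> UNIV" by simp
  have cU2: "continuous_on {\<alpha>..\<beta>} U2"
    unfolding U2_def[abs_def] S2_def
    by (intro continuous_intros continuous_on_compose2[OF c2 cS imsub] continuous_on_compose2[OF c1 cS imsub] cS1 cS)
       (use pos SS_pos k2 in force)+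
  have ca: "c \<notin> {a..b}" using Sa unfolding c_def by auto
  have cb: "d \<notin> {a..b}" using Sb unfolding d_def by auto
  have bd: "U \<alpha> = 0" "U \<beta> = 0" "U1 \<alpha> = 0" "U1 \<beta> = 0"
    unfolding U_def U1_def using ab(3)[OF ca] ab(3)[OF cb] z1[OF ca] z1[OF cb] c_def d_def by auto
  note REL = rellich_r[OF k4 a0 ab' dU dU1 cU2 bd]
  have LU: "U2 x + real k * (cosh x / sinh x) * U1 x = S1 x^2 * rad_lap N v (SS k x)" if "x \<in> {\<alpha>..\<beta>}" for x
  proof -
    have p: "SS k x > 0" using SS_pos[OF pos[OF that] k2] .
    show ?thesis unfolding U2_def U1_def S2_def rad_lap_def rk using p
      by (simp add: field_simps power2_eq_square)
  qed
  define h0 where "h0 s = (1 / rho N s) * (rad_lap N v s)^2 * s ^ (N - 1)" for s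
  define h1 where "h1 s = rho N s * (v s)^2 * s ^ (N - 1)" for s
  define h2 where "h2 s = rho N s / (r_fun N s)^4 * (v s)^2 * s ^ (N - 1)" for s
  define h3 where "h3 s = rho N s / (r_fun N s)^2 * (v s)^2 * s ^ (N - 1)" for s
  have out: "s \<notin> {a..b}" if "s \<notin> {c..d}" for s
    using that Sa Sb unfolding c_def d_def by auto
  have rp: "r_fun N s > 0" "s > 0" if "s \<in> {c..d}" for s
    using rpos[OF that] pos that c0' by auto
  have cv: "continuous_on {c..d} v" using c0 continuous_on_subset by blast
  have cv1: "continuous_on {c..d} (deriv v)" using c1 continuous_on_subset by blast
  have cv2: "continuous_on {c..d} (deriv (deriv v))" using c2 continuous_on_subset by blast
  have imc: "SS k ` {\<alpha>..\<beta>} \<subseteq> {SS k \<alpha>..SS k \<beta>}" using im unfolding c_def d_def by simp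
  have cd': "SS k \<alpha> \<le> SS k \<beta>" "0 < SS k \<alpha>" using cd c0' unfolding c_def d_def by auto
  note TR = transfer[OF ab' cd' dS' imc]
  have T0: "integral {0<..} h0 = integral {\<alpha>..\<beta>} (\<lambda>x. S1 x * h0 (SS k x))"
  proof (rule TR)
    show "continuous_on {SS k \<alpha>..SS k \<beta>} h0" unfolding h0_def[abs_def] rho_def rad_lap_def c_def[symmetric] d_def[symmetric]
      by (intro continuous_intros crf cv cv1 cv2) (use rp in force)+
    fix x assume "x \<notin> {SS k \<alpha>..SS k \<beta>}"
    hence "x \<notin> {a..b}" using out unfolding c_def d_def by simp
    thus "h0 x = 0" unfolding h0_def rad_lap_def using z1 z2 by simp
  qed
  have T1: "integral {0<..} h1 = integral {\<alpha>..\<beta>} (\<lambda>x. S1 x * h1 (SS k x))"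
  proof (rule TR)
    show "continuous_on {SS k \<alpha>..SS k \<beta>} h1" unfolding h1_def[abs_def] rho_def c_def[symmetric] d_def[symmetric]
      by (intro continuous_intros crf cv) (use rp in force)+
    fix x assume "x \<notin> {SS k \<alpha>..SS k \<beta>}"
    hence "x \<notin> {a..b}" using out unfolding c_def d_def by simp
    thus "h1 x = 0" unfolding h1_def using ab(3) by simp
  qed
  have T2: "integral {0<..} h2 = integral {\<alpha>..\<beta>} (\<lambda>x. S1 x * h2 (SS k x))"
  proof (rule TR)
    show "continuous_on {SS k \<alpha>..SS k \<beta>} h2" unfolding h2_def[abs_def] rho_def c_def[symmetric] d_def[symmetric]
      by (intro continuous_intros crf cv) (use rp in force)+
    fix x assume "x \<notin> {SS k \<alpha>..SS k \<beta>}"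
    hence "x \<notin> {a..b}" using out unfolding c_def d_def by simp
    thus "h2 x = 0" unfolding h2_def using ab(3) by simp
  qed
  have T3: "integral {0<..} h3 = integral {\<alpha>..\<beta>} (\<lambda>x. S1 x * h3 (SS k x))"
  proof (rule TR)
    show "continuous_on {SS k \<alpha>..SS k \<beta>} h3" unfolding h3_def[abs_def] rho_def c_def[symmetric] d_def[symmetric]
      by (intro continuous_intros crf cv) (use rp in force)+
    fix x assume "x \<notin> {SS k \<alpha>..SS k \<beta>}"
    hence "x \<notin> {a..b}" using out unfolding c_def d_def by simp
    thus "h3 x = 0" unfolding h3_def using ab(3) by simp
  qed
  have P0: "S1 x * h0 (SS k x) = (U2 x + real k * (cosh x / sinh x) * U1 x)^2 * sinh x ^ k"
    if x: "x \<in> {\<alpha>..\<beta>}" for x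
  proof -
    have p: "SS k x > 0" using SS_pos[OF pos[OF x] k2] .
    have sh: "sinh x > 0" using pos[OF x] by simp
    show ?thesis unfolding h0_def rho_def rf[OF pos[OF x]] Nk
      by (rule id0[OF p sh S1_def LU[OF x]])
  qed
  have PW: "S1 x * (rho N (SS k x) / W * (v (SS k x))^2 * SS k x ^ (N - 1)) = U x^2 * sinh x ^ k / W"
    if x: "x \<in> {\<alpha>..\<beta>}" for x W
  proof -
    have p: "SS k x > 0" using SS_pos[OF pos[OF x] k2] .
    have sh: "sinh x > 0" using pos[OF x] by simp
    show ?thesis unfolding rho_def rf[OF pos[OF x]] Nk U_def
      by (rule id1[OF p sh S1_def])
  qed
  have P1: "S1 x * h1 (SS k x) = U x^2 * sinh x ^ k" if x: "x \<in> {\<alpha>..\<beta>}" for x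
    using PW[OF x, of 1] unfolding h1_def by simp
  have P2: "S1 x * h2 (SS k x) = U x^2 * sinh x ^ k / x^4" if x: "x \<in> {\<alpha>..\<beta>}" for x
    using PW[OF x, of "x^4"] unfolding h2_def rf[OF pos[OF x]] by simp
  have P3: "S1 x * h3 (SS k x) = U x^2 * sinh x ^ k / x^2" if x: "x \<in> {\<alpha>..\<beta>}" for x
    using PW[OF x, of "x^2"] unfolding h3_def rf[OF pos[OF x]] by simp
  have I0: "integral {0<..} h0 = integral {\<alpha>..\<beta>} (\<lambda>r. (U2 r + real k * (cosh r/sinh r) * U1 r)^2 * sinh r^k)"
    unfolding T0 by (rule integral_cong) (use P0 in simp)
  have I1: "integral {0<..} h1 = integral {\<alpha>..\<beta>} (\<lambda>r. U r^2 * sinh r ^ k)"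
    unfolding T1 by (rule integral_cong) (use P1 in simp)
  have I2: "integral {0<..} h2 = integral {\<alpha>..\<beta>} (\<lambda>r. U r^2 * sinh r ^ k / r^4)"
    unfolding T2 by (rule integral_cong) (use P2 in simp)
  have I3: "integral {0<..} h3 = integral {\<alpha>..\<beta>} (\<lambda>r. U r^2 * sinh r ^ k / r^2)"
    unfolding T3 by (rule integral_cong) (use P3 in simp)
  have cU: "continuous_on {\<alpha>..\<beta>} U"
    by (rule continuous_at_imp_continuous_on) (use dU DERIV_isCont in blast)
  have iA: "(\<lambda>r. U r^2 * sinh r ^ k) integrable_on {\<alpha>..\<beta>}"
    by (intro integrable_continuous_interval continuous_intros cU)
  have iB: "(\<lambda>r. U r^2 * sinh r ^ k / r^4) integrable_on {\<alpha>..\<beta>}"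
    by (intro integrable_continuous_interval continuous_intros cU) (use pos in force)
  have iC: "(\<lambda>r. U r^2 * sinh r ^ k / r^2) integrable_on {\<alpha>..\<beta>}"
    by (intro integrable_continuous_interval continuous_intros cU) (use pos in force)
  have split: "integral {\<alpha>..\<beta>} (\<lambda>r. U r^2 * sinh r^k * ((real k/2)^4 + (real k/2)^2/(2*r^2) + 9/(16*r^4)))
     = (real k)^4/16 * integral {\<alpha>..\<beta>} (\<lambda>r. U r^2 * sinh r ^ k)
       + 9/16 * integral {\<alpha>..\<beta>} (\<lambda>r. U r^2 * sinh r ^ k / r^4)
       + (real k)^2/8 * integral {\<alpha>..\<beta>} (\<lambda>r. U r^2 * sinh r ^ k / r^2)"
  proof -
    have "integral {\<alpha>..\<beta>} (\<lambda>r. U r^2 * sinh r^k * ((real k/2)^4 + (real k/2)^2/(2*r^2) + 9/(16*r^4)))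
       = integral {\<alpha>..\<beta>} (\<lambda>r. ((real k)^4/16 * (U r^2 * sinh r ^ k) + 9/16 * (U r^2 * sinh r ^ k / r^4))
           + (real k)^2/8 * (U r^2 * sinh r ^ k / r^2))"
      by (rule integral_cong) (simp add: field_simps)
    also have "\<dots> = integral {\<alpha>..\<beta>} (\<lambda>r. (real k)^4/16 * (U r^2 * sinh r ^ k) + 9/16 * (U r^2 * sinh r ^ k / r^4))
        + integral {\<alpha>..\<beta>} (\<lambda>r. (real k)^2/8 * (U r^2 * sinh r ^ k / r^2))"
      by (intro integral_add integrable_add integrable_cmul_real iA iB iC)
    also have "\<dots> = (real k)^4/16 * integral {\<alpha>..\<beta>} (\<lambda>r. U r^2 * sinh r ^ k)
       + 9/16 * integral {\<alpha>..\<beta>} (\<lambda>r. U r^2 * sinh r ^ k / r^4)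
       + (real k)^2/8 * integral {\<alpha>..\<beta>} (\<lambda>r. U r^2 * sinh r ^ k / r^2)"
      by (simp only: integral_add[OF integrable_cmul_real[OF iA] integrable_cmul_real[OF iB]] integral_mult[OF iA, symmetric] integral_mult[OF iB, symmetric] integral_mult[OF iC, symmetric])
    finally show ?thesis .
  qed
  show ?thesis
    using REL unfolding split I0[symmetric] I1[symmetric] I2[symmetric] I3[symmetric]
    unfolding h0_def[abs_def] h1_def[abs_def] h2_def[abs_def] h3_def[abs_def] rk by simp
qed


end
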